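(* Let $M$ be a right $R$-module such that every submodule $N$ of $M$ can be written as $N=X+A$ with $X$ a cyclic submodule of $M$ and $A\ll M$. Then $M$ is principally Goldie*-lifting if and only if $M$ is Goldie*-lifting.
   Context: $R$ is an associative ring with identity; modules are unital right $R$-modules. $K\ll M$ means $K$ is small in $M$. For submodules $X,Y$ of $M$, $X\,\beta^*\,Y$ means $(X+Y)/X\ll M/X$ and $(X+Y)/Y\ll M/Y$. $M$ is Goldie*-lifting if for every submodule $X$ of $M$ there is a direct summand $D$ of $M$ with $X\,\beta^*\,D$; $M$ is principally Goldie*-lifting if this holds for every cyclic submodule $X$. *)

theory Defs
  imports "HOL-Algebra.Algebra"
begin

text \<open>The additive group of the module is represented by a commutative group M
  (HOL-Algebra monoid record, whose operation is the module addition);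
  sm is the right scalar multiplication x r.\<close>

definition right_module ::
  "('r, 'c) ring_scheme \<Rightarrow> ('b, 'd) monoid_scheme \<Rightarrow> ('b \<Rightarrow> 'r \<Rightarrow> 'b) \<Rightarrow> bool" where
  "right_module R M sm \<longleftrightarrow> ring R \<and> comm_group M \<and>
     (\<forall>x\<in>carrier M. \<forall>r\<in>carrier R. sm x r \<in> carrier M) \<and>
     (\<forall>x\<in>carrier M. \<forall>y\<in>carrier M. \<forall>r\<in>carrier R.
        sm (x \<otimes>\<^bsub>M\<^esub> y) r = sm x r \<otimes>\<^bsub>M\<^esub> sm y r) \<and>
     (\<forall>x\<in>carrier M. \<forall>r\<in>carrier R. \<forall>s\<in>carrier R.
        sm x (r \<oplus>\<^bsub>R\<^esub> s) = sm x r \<otimes>\<^bsub>M\<^esub> sm x s) \<and>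
     (\<forall>x\<in>carrier M. \<forall>r\<in>carrier R. \<forall>s\<in>carrier R.
        sm x (r \<otimes>\<^bsub>R\<^esub> s) = sm (sm x r) s) \<and>
     (\<forall>x\<in>carrier M. sm x \<one>\<^bsub>R\<^esub> = x)"

text \<open>Submodules (generic in the structure, so they can be applied to quotients).\<close>
definition submod ::
  "('r, 'c) ring_scheme \<Rightarrow> ('b, 'd) monoid_scheme \<Rightarrow> ('b \<Rightarrow> 'r \<Rightarrow> 'b) \<Rightarrow> 'b set \<Rightarrow> bool" where
  "submod R M sm N \<longleftrightarrow> subgroup N M \<and> (\<forall>x\<in>N. \<forall>r\<in>carrier R. sm x r \<in> N)"

definition small ::
  "('r, 'c) ring_scheme \<Rightarrow> ('b, 'd) monoid_scheme \<Rightarrow> ('b \<Rightarrow> 'r \<Rightarrow> 'b) \<Rightarrow> 'b set \<Rightarrow> bool" where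
  "small R M sm K \<longleftrightarrow> submod R M sm K \<and>
     (\<forall>L. submod R M sm L \<and> K <#>\<^bsub>M\<^esub> L = carrier M \<longrightarrow> L = carrier M)"

definition quot_sm ::
  "('b, 'd) monoid_scheme \<Rightarrow> 'b set \<Rightarrow> ('b \<Rightarrow> 'r \<Rightarrow> 'b) \<Rightarrow> 'b set \<Rightarrow> 'r \<Rightarrow> 'b set" where
  "quot_sm M U sm C r = (\<Union>x\<in>C. r_coset M U (sm x r))"

definition quot_image :: "('b, 'd) monoid_scheme \<Rightarrow> 'b set \<Rightarrow> 'b set \<Rightarrow> 'b set set" where
  "quot_image M U V = r_coset M U ` (U <#>\<^bsub>M\<^esub> V)"

definition beta_star ::
  "('r, 'c) ring_scheme \<Rightarrow> ('b, 'd) monoid_scheme \<Rightarrow> ('b \<Rightarrow> 'r \<Rightarrow> 'b) \<Rightarrow> 'b set \<Rightarrow> 'b set \<Rightarrow> bool" where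
  "beta_star R M sm U V \<longleftrightarrow>
     small R (M Mod U) (quot_sm M U sm) (quot_image M U V) \<and>
     small R (M Mod V) (quot_sm M V sm) (quot_image M V U)"

definition direct_summand ::
  "('r, 'c) ring_scheme \<Rightarrow> ('b, 'd) monoid_scheme \<Rightarrow> ('b \<Rightarrow> 'r \<Rightarrow> 'b) \<Rightarrow> 'b set \<Rightarrow> bool" where
  "direct_summand R M sm D \<longleftrightarrow> submod R M sm D \<and>
     (\<exists>D'. submod R M sm D' \<and> D <#>\<^bsub>M\<^esub> D' = carrier M \<and> D \<inter> D' = {\<one>\<^bsub>M\<^esub>})"

definition cyclic_submod ::
  "('r, 'c) ring_scheme \<Rightarrow> ('b, 'd) monoid_scheme \<Rightarrow> ('b \<Rightarrow> 'r \<Rightarrow> 'b) \<Rightarrow> 'b set \<Rightarrow> bool" where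
  "cyclic_submod R M sm U \<longleftrightarrow> (\<exists>m\<in>carrier M. U = (\<lambda>r. sm m r) ` carrier R)"

definition goldie_star_lifting ::
  "('r, 'c) ring_scheme \<Rightarrow> ('b, 'd) monoid_scheme \<Rightarrow> ('b \<Rightarrow> 'r \<Rightarrow> 'b) \<Rightarrow> bool" where
  "goldie_star_lifting R M sm \<longleftrightarrow>
     (\<forall>U. submod R M sm U \<longrightarrow> (\<exists>D. direct_summand R M sm D \<and> beta_star R M sm U D))"

definition principally_goldie_star_lifting ::
  "('r, 'c) ring_scheme \<Rightarrow> ('b, 'd) monoid_scheme \<Rightarrow> ('b \<Rightarrow> 'r \<Rightarrow> 'b) \<Rightarrow> bool" where
  "principally_goldie_star_lifting R M sm \<longleftrightarrow>
     (\<forall>U. cyclic_submod R M sm U \<longrightarrow> (\<exists>D. direct_summand R M sm D \<and> beta_star R M sm U D))"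

end

theory Submission imports Defs begin

lemma rm_cg: "right_module R M sm \<Longrightarrow> comm_group M" by (simp add: right_module_def)
lemma rm_ring: "right_module R M sm \<Longrightarrow> ring R" by (simp add: right_module_def)

context comm_group begin

lemma set_mult_mem: "x \<in> A <#> B \<longleftrightarrow> (\<exists>a\<in>A. \<exists>b\<in>B. x = a \<otimes> b)"
  by (auto simp: set_mult_def)

lemma rcos_mem: "x \<in> U #> c \<longleftrightarrow> (\<exists>u\<in>U. x = u \<otimes> c)"
  by (auto simp: r_coset_def)

lemma sum_submod:
  assumes rm: "right_module R G sm" and U: "submod R G sm U" and V: "submod R G sm V"
  shows "submod R G sm (U <#> V)"
proof -
  have sU: "subgroup U G" and sV: "subgroup V G" using U V by (auto simp: submod_def)
  have UC: "U \<subseteq> carrier G" "V \<subseteq> carrier G" using sU sV subgroup.subset by auto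
  have "subgroup (U <#> V) G"
  proof (rule subgroupI)
    show "U <#> V \<subseteq> carrier G" using UC by (auto simp: set_mult_def)
    show "U <#> V \<noteq> {}" using sU sV subgroup.one_closed by (fastforce simp: set_mult_def)
  next
    fix a assume "a \<in> U <#> V"
    then obtain u v where uv: "u \<in> U" "v \<in> V" "a = u \<otimes> v" by (auto simp: set_mult_def)
    then have "inv a = inv u \<otimes> inv v" using UC by (auto simp: inv_mult subsetD)
    then show "inv a \<in> U <#> V" using uv sU sV subgroup.m_inv_closed by (fastforce simp: set_mult_def)
  next
    fix a b assume "a \<in> U <#> V" "b \<in> U <#> V"
    then obtain u v u' v' where uv: "u \<in> U" "v \<in> V" "a = u \<otimes> v" "u' \<in> U" "v' \<in> V" "b = u' \<otimes> v'"
      by (auto simp: set_mult_def)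
    then have "a \<otimes> b = (u \<otimes> u') \<otimes> (v \<otimes> v')" using UC by (simp add: m_ac subsetD)
    then show "a \<otimes> b \<in> U <#> V" using uv sU sV subgroup.m_closed by (fastforce simp: set_mult_def)
  qed
  moreover have "\<forall>x\<in>U <#> V. \<forall>r\<in>carrier R. sm x r \<in> U <#> V"
  proof (intro ballI)
    fix x r assume "x \<in> U <#> V" "r \<in> carrier R"
    then obtain u v where uv: "u \<in> U" "v \<in> V" "x = u \<otimes> v" by (auto simp: set_mult_def)
    have "sm x r = sm u r \<otimes> sm v r" using rm uv UC \<open>r \<in> carrier R\<close> unfolding right_module_def by (meson subsetD)
    moreover have "sm u r \<in> U" "sm v r \<in> V" using U V uv \<open>r \<in> carrier R\<close> by (auto simp: submod_def)
    ultimately show "sm x r \<in> U <#> V" by (auto simp: set_mult_def)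
  qed
  ultimately show ?thesis by (simp add: submod_def)
qed

lemma cyclic_is_submod:
  assumes rm: "right_module R G sm" and C: "cyclic_submod R G sm Xc"
  shows "submod R G sm Xc"
proof -
  obtain m where m: "m \<in> carrier G" and Xc: "Xc = (\<lambda>r. sm m r) ` carrier R"
    using C by (auto simp: cyclic_submod_def)
  interpret R: ring R using rm by (simp add: right_module_def)
  have cl: "\<And>r. r \<in> carrier R \<Longrightarrow> sm m r \<in> carrier G" using rm m by (simp add: right_module_def)
  have add: "\<And>r s. r \<in> carrier R \<Longrightarrow> s \<in> carrier R \<Longrightarrow> sm m (r \<oplus>\<^bsub>R\<^esub> s) = sm m r \<otimes> sm m s"
    using rm m by (simp add: right_module_def)
  have mul: "\<And>r s. r \<in> carrier R \<Longrightarrow> s \<in> carrier R \<Longrightarrow> sm (sm m r) s = sm m (r \<otimes>\<^bsub>R\<^esub> s)"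
    using rm m by (simp add: right_module_def)
  have z: "sm m \<zero>\<^bsub>R\<^esub> = \<one>"
  proof -
    have "sm m \<zero>\<^bsub>R\<^esub> \<otimes> sm m \<zero>\<^bsub>R\<^esub> = sm m \<zero>\<^bsub>R\<^esub> \<otimes> \<one>"
      using add[of "\<zero>\<^bsub>R\<^esub>" "\<zero>\<^bsub>R\<^esub>"] cl[of "\<zero>\<^bsub>R\<^esub>"] by simp
    then show ?thesis using cl[of "\<zero>\<^bsub>R\<^esub>"] l_cancel by (metis R.zero_closed one_closed)
  qed
  have iv: "\<And>r. r \<in> carrier R \<Longrightarrow> inv (sm m r) = sm m (\<ominus>\<^bsub>R\<^esub> r)"
  proof -
    fix r assume r: "r \<in> carrier R"
    have "sm m (\<ominus>\<^bsub>R\<^esub> r) \<otimes> sm m r = \<one>"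
      using add[of "\<ominus>\<^bsub>R\<^esub> r" r] r z by (simp add: R.l_neg)
    then show "inv (sm m r) = sm m (\<ominus>\<^bsub>R\<^esub> r)" using r cl
      by (metis R.a_inv_closed inv_equality)
  qed
  have "subgroup Xc G"
  proof (rule subgroupI)
    show "Xc \<subseteq> carrier G" using Xc cl by auto
    show "Xc \<noteq> {}" using Xc by auto
    show "\<And>a. a \<in> Xc \<Longrightarrow> inv a \<in> Xc" using Xc iv by auto
    show "\<And>a b. a \<in> Xc \<Longrightarrow> b \<in> Xc \<Longrightarrow> a \<otimes> b \<in> Xc" using Xc add
      by (auto simp flip: add)
  qed
  moreover have "\<forall>x\<in>Xc. \<forall>r\<in>carrier R. sm x r \<in> Xc" using Xc mul by auto
  ultimately show ?thesis by (simp add: submod_def)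
qed


lemma quot_sm_rcos:
  assumes rm: "right_module R G sm" and U: "submod R G sm U"
    and c: "c \<in> carrier G" and r: "r \<in> carrier R"
  shows "quot_sm G U sm (U #> c) r = U #> sm c r"
proof -
  have sU: "subgroup U G" using U by (simp add: submod_def)
  have UC: "U \<subseteq> carrier G" using sU subgroup.subset by blast
  have smc: "\<And>x. x \<in> carrier G \<Longrightarrow> sm x r \<in> carrier G" using rm r by (simp add: right_module_def)
  have eq: "U #> sm x r = U #> sm c r" if x: "x \<in> U #> c" for x
  proof -
    obtain u where u: "u \<in> U" "x = u \<otimes> c" using x by (auto simp: r_coset_def)
    have uc: "u \<in> carrier G" using u UC by blast
    have "sm x r = sm u r \<otimes> sm c r" using rm u uc c r unfolding right_module_def by blast
    moreover have "sm u r \<in> U" using U u r by (simp add: submod_def)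
    ultimately have "sm x r \<in> U #> sm c r" by (auto simp: r_coset_def)
    then show ?thesis using repr_independence[OF _ smc[OF c] sU] by simp
  qed
  have "c \<in> U #> c" using rcos_self[OF c sU] .
  then show ?thesis unfolding quot_sm_def using eq by blast
qed

lemma image_submod:
  assumes rm: "right_module R G sm" and U: "submod R G sm U"
    and W: "submod R G sm W" and UW: "U \<subseteq> W"
  shows "submod R (G Mod U) (quot_sm G U sm) (r_coset G U ` W)"
proof -
  have sU: "subgroup U G" using U by (simp add: submod_def)
  have sW: "subgroup W G" using W by (simp add: submod_def)
  interpret N: normal U G using subgroup_imp_normal[OF sU] .
  have gM: "group (G Mod U)" by (rule N.factorgroup_is_group)
  have WC: "W \<subseteq> carrier G" using sW subgroup.subset by blast
  have "subgroup (r_coset G U ` W) (G Mod U)"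
  proof (rule group.subgroupI[OF gM])
    show "r_coset G U ` W \<subseteq> carrier (G Mod U)" using WC by (auto simp: carrier_FactGroup)
    show "r_coset G U ` W \<noteq> {}" using sW subgroup.one_closed by blast
  next
    fix a assume "a \<in> r_coset G U ` W"
    then obtain w where w: "w \<in> W" "a = U #> w" by auto
    have wc: "w \<in> carrier G" using w WC by blast
    have "inv\<^bsub>G Mod U\<^esub> a = set_inv a"
      using w wc by (intro N.inv_FactGroup) (auto simp: carrier_FactGroup)
    also have "\<dots> = U #> inv w" using N.rcos_inv[OF wc] w by simp
    finally show "inv\<^bsub>G Mod U\<^esub> a \<in> r_coset G U ` W"
      using sW w subgroup.m_inv_closed by fastforce
  next
    fix a b assume "a \<in> r_coset G U ` W" "b \<in> r_coset G U ` W"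
    then obtain w w' where w: "w \<in> W" "a = U #> w" "w' \<in> W" "b = U #> w'" by auto
    have "a \<otimes>\<^bsub>G Mod U\<^esub> b = U #> (w \<otimes> w')" using w WC N.rcos_sum by (simp add: subsetD)
    then show "a \<otimes>\<^bsub>G Mod U\<^esub> b \<in> r_coset G U ` W" using sW w subgroup.m_closed by fastforce
  qed
  moreover have "\<forall>x\<in>r_coset G U ` W. \<forall>r\<in>carrier R. quot_sm G U sm x r \<in> r_coset G U ` W"
  proof (intro ballI)
    fix x r assume "x \<in> r_coset G U ` W" "r \<in> carrier R"
    then obtain w where w: "w \<in> W" "x = U #> w" by auto
    have wc: "w \<in> carrier G" using w WC by blast
    have "quot_sm G U sm x r = U #> sm w r" using quot_sm_rcos[OF rm U wc \<open>r \<in> carrier R\<close>] w by simp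
    moreover have "sm w r \<in> W" using W w \<open>r \<in> carrier R\<close> by (simp add: submod_def)
    ultimately show "quot_sm G U sm x r \<in> r_coset G U ` W" by simp
  qed
  ultimately show ?thesis by (simp add: submod_def)
qed


lemma small_quot_iff:
  assumes rm: "right_module R G sm" and U: "submod R G sm U" and V: "submod R G sm V"
  shows "small R (G Mod U) (quot_sm G U sm) (quot_image G U V) \<longleftrightarrow>
    (\<forall>L. submod R G sm L \<and> U \<subseteq> L \<and> V <#> L = carrier G \<longrightarrow> L = carrier G)"
proof -
  have sU: "subgroup U G" using U by (simp add: submod_def)
  have sV: "subgroup V G" using V by (simp add: submod_def)
  interpret N: normal U G using subgroup_imp_normal[OF sU] .
  have gM: "group (G Mod U)" by (rule N.factorgroup_is_group)
  have UC: "U \<subseteq> carrier G" "V \<subseteq> carrier G" using sU sV subgroup.subset by auto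
  have UV: "submod R G sm (U <#> V)" using sum_submod[OF rm U V] .
  have UsUV: "U \<subseteq> U <#> V"
  proof
    fix u assume "u \<in> U" then have "u = u \<otimes> \<one>" "\<one> \<in> V" using UC sV subgroup.one_closed by auto
    then show "u \<in> U <#> V" using \<open>u \<in> U\<close> unfolding set_mult_def by blast
  qed
  have Ssub: "submod R (G Mod U) (quot_sm G U sm) (quot_image G U V)"
    unfolding quot_image_def using image_submod[OF rm U UV UsUV] .
  have Ssub2: "quot_image G U V \<subseteq> carrier (G Mod U)"
    using Ssub subgroup.subset by (auto simp: submod_def)
  have smm: "x \<in> A <#>\<^bsub>G Mod U\<^esub> B \<longleftrightarrow> (\<exists>a\<in>A. \<exists>b\<in>B. x = a <#> b)" for x A B
    by (auto simp: set_mult_def)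
  show ?thesis
  proof
    assume sm: "small R (G Mod U) (quot_sm G U sm) (quot_image G U V)"
    show "\<forall>L. submod R G sm L \<and> U \<subseteq> L \<and> V <#> L = carrier G \<longrightarrow> L = carrier G"
    proof (intro allI impI)
      fix L assume H: "submod R G sm L \<and> U \<subseteq> L \<and> V <#> L = carrier G"
      have sL: "subgroup L G" using H by (simp add: submod_def)
      have LC: "L \<subseteq> carrier G" using sL subgroup.subset by blast
      have L'sub: "submod R (G Mod U) (quot_sm G U sm) (r_coset G U ` L)"
        using image_submod[OF rm U] H by blast
      have L'C: "r_coset G U ` L \<subseteq> carrier (G Mod U)"
        using L'sub subgroup.subset by (auto simp: submod_def)
      have "quot_image G U V <#>\<^bsub>G Mod U\<^esub> r_coset G U ` L = carrier (G Mod U)"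
      proof
        show "quot_image G U V <#>\<^bsub>G Mod U\<^esub> r_coset G U ` L \<subseteq> carrier (G Mod U)"
          using monoid.set_mult_closed[OF group.is_monoid[OF gM] Ssub2 L'C] .
        show "carrier (G Mod U) \<subseteq> quot_image G U V <#>\<^bsub>G Mod U\<^esub> r_coset G U ` L"
        proof
          fix C assume "C \<in> carrier (G Mod U)"
          then obtain x where x: "x \<in> carrier G" "C = U #> x" by (auto simp: carrier_FactGroup)
          have "x \<in> V <#> L" using H x by simp
          then obtain v l where vl: "v \<in> V" "l \<in> L" "x = v \<otimes> l" unfolding set_mult_mem by blast
          have vc: "v \<in> carrier G" "l \<in> carrier G" using vl UC LC by auto
          have "v = \<one> \<otimes> v" "\<one> \<in> U" using vc sU subgroup.one_closed by auto
          then have "v \<in> U <#> V" using vl unfolding set_mult_mem by blast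
          then have "U #> v \<in> quot_image G U V" by (simp add: quot_image_def)
          moreover have "U #> l \<in> r_coset G U ` L" using vl by simp
          moreover have "C = (U #> v) <#> (U #> l)" using N.rcos_sum[OF vc] x vl by simp
          ultimately show "C \<in> quot_image G U V <#>\<^bsub>G Mod U\<^esub> r_coset G U ` L"
            unfolding smm by blast
        qed
      qed
      then have L'eq: "r_coset G U ` L = carrier (G Mod U)" using sm L'sub by (simp add: small_def)
      show "L = carrier G"
      proof
        show "L \<subseteq> carrier G" using LC .
        show "carrier G \<subseteq> L"
        proof
          fix x assume x: "x \<in> carrier G"
          then have "U #> x \<in> r_coset G U ` L" using L'eq by (simp add: carrier_FactGroup)
          then obtain l where l: "l \<in> L" "U #> x = U #> l" by auto
          have "x \<in> U #> l" using rcos_self[OF x sU] l by simp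
          then obtain u where u: "u \<in> U" "x = u \<otimes> l" by (auto simp: r_coset_def)
          have "u \<in> L" using H u(1) by blast
          then show "x \<in> L" using subgroup.m_closed[OF sL _ l(1)] u(2) by simp
        qed
      qed
    qed
  next
    assume P: "\<forall>L. submod R G sm L \<and> U \<subseteq> L \<and> V <#> L = carrier G \<longrightarrow> L = carrier G"
    show "small R (G Mod U) (quot_sm G U sm) (quot_image G U V)"
      unfolding small_def
    proof (intro conjI allI impI)
      show "submod R (G Mod U) (quot_sm G U sm) (quot_image G U V)" using Ssub .
      fix L' assume H: "submod R (G Mod U) (quot_sm G U sm) L' \<and>
                 quot_image G U V <#>\<^bsub>G Mod U\<^esub> L' = carrier (G Mod U)"
      have sL': "subgroup L' (G Mod U)" using H by (simp add: submod_def)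
      have L'C: "L' \<subseteq> rcosets U" using subgroup.subset[OF sL'] by (simp add: FactGroup_def)
      have Lcos: "\<exists>y\<in>carrier G. C = U #> y" if "C \<in> L'" for C
        using that L'C unfolding RCOSETS_def by blast
      define L where "L = \<Union>L'"
      have UL': "U \<in> L'" using subgroup.one_closed[OF sL'] by simp
      have UL: "U \<subseteq> L" using UL' L_def by blast
      have LC: "L \<subseteq> carrier G"
        using Lcos r_coset_subset_G[OF UC(1)] unfolding L_def by blast
      have multL: "a \<otimes> b \<in> L" if ab0: "a \<in> L" "b \<in> L" for a b
      proof -
        obtain C1 C2 where C: "C1 \<in> L'" "C2 \<in> L'" "a \<in> C1" "b \<in> C2" using ab0 L_def by blast
        have "C1 \<otimes>\<^bsub>G Mod U\<^esub> C2 \<in> L'" using subgroup.m_closed[OF sL' C(1,2)] .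
        moreover have "a \<otimes> b \<in> C1 \<otimes>\<^bsub>G Mod U\<^esub> C2" using C by (auto simp: set_mult_def)
        ultimately show ?thesis using L_def by blast
      qed
      have sL: "subgroup L G"
      proof (rule subgroupI)
        show "L \<subseteq> carrier G" using LC .
        show "L \<noteq> {}" using UL sU subgroup.one_closed by blast
        show "\<And>a b. a \<in> L \<Longrightarrow> b \<in> L \<Longrightarrow> a \<otimes> b \<in> L" using multL .
      next
        fix a assume "a \<in> L"
        then obtain C where C: "C \<in> L'" "a \<in> C" using L_def by blast
        have "inv\<^bsub>G Mod U\<^esub> C \<in> L'" using subgroup.m_inv_closed[OF sL' C(1)] .
        moreover have "inv\<^bsub>G Mod U\<^esub> C = set_inv C"
          using C L'C by (intro N.inv_FactGroup) (auto simp: FactGroup_def)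
        moreover have "inv a \<in> set_inv C" using C by (auto simp: SET_INV_def)
        ultimately show "inv a \<in> L" using L_def by blast
      qed
      have smL: "\<forall>x\<in>L. \<forall>r\<in>carrier R. sm x r \<in> L"
      proof (intro ballI)
        fix a r assume a: "a \<in> L" and r: "r \<in> carrier R"
        then obtain C where C: "C \<in> L'" "a \<in> C" using L_def by blast
        have "quot_sm G U sm C r \<in> L'" using H C r by (simp add: submod_def)
        moreover have "sm a r \<in> carrier G" using rm a LC r by (auto simp: right_module_def)
        then have "sm a r \<in> U #> sm a r" using rcos_self sU by blast
        then have "sm a r \<in> quot_sm G U sm C r" using C unfolding quot_sm_def by blast
        ultimately show "sm a r \<in> L" using L_def by blast
      qed
      have Lsub: "submod R G sm L" using sL smL by (simp add: submod_def)
      have VL: "V <#> L = carrier G"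
      proof
        show "V <#> L \<subseteq> carrier G" using set_mult_closed[OF UC(2) LC] .
        show "carrier G \<subseteq> V <#> L"
        proof
          fix x assume x: "x \<in> carrier G"
          then have "U #> x \<in> carrier (G Mod U)" by (simp add: carrier_FactGroup)
          then have "U #> x \<in> quot_image G U V <#>\<^bsub>G Mod U\<^esub> L'" using H by simp
          then obtain s C where sC: "s \<in> quot_image G U V" "C \<in> L'" "U #> x = s <#> C"
            unfolding smm by blast
          obtain w where w: "w \<in> U <#> V" "s = U #> w" using sC by (auto simp: quot_image_def)
          have "x \<in> U #> x" using rcos_self[OF x sU] .
          then obtain a b where ab: "a \<in> s" "b \<in> C" "x = a \<otimes> b" using sC by (auto simp: set_mult_def)
          obtain u where u: "u \<in> U" "a = u \<otimes> w" using ab w by (auto simp: r_coset_def)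
          obtain u' v where uv: "u' \<in> U" "v \<in> V" "w = u' \<otimes> v" using w by (auto simp: set_mult_def)
          have bL: "b \<in> L" unfolding L_def using ab(2) sC(2) by blast
          have cc: "u \<in> carrier G" "u' \<in> carrier G" "v \<in> carrier G" "b \<in> carrier G"
            using u uv UC bL LC by auto
          have "x = v \<otimes> ((u \<otimes> u') \<otimes> b)" using ab u uv cc by (simp add: m_ac)
          moreover have "(u \<otimes> u') \<otimes> b \<in> L" using multL UL u uv bL by blast
          ultimately show "x \<in> V <#> L" using uv by (auto simp: set_mult_def)
        qed
      qed
      have Leq: "L = carrier G" using P Lsub UL VL by blast
      show "L' = carrier (G Mod U)"
      proof
        show "L' \<subseteq> carrier (G Mod U)" using subgroup.subset[OF sL'] .
        show "carrier (G Mod U) \<subseteq> L'"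
        proof
          fix C assume "C \<in> carrier (G Mod U)"
          then obtain x where x: "x \<in> carrier G" "C = U #> x" by (auto simp: carrier_FactGroup)
          then have "x \<in> \<Union>L'" using Leq by (simp add: L_def)
          then obtain C' where C': "C' \<in> L'" "x \<in> C'" by blast
          then obtain y where y: "y \<in> carrier G" "C' = U #> y" using Lcos by blast
          have "U #> y = U #> x" using repr_independence[OF _ y(1) sU] C' y by simp
          then show "C \<in> L'" using x y C' by simp
        qed
      qed
    qed
  qed
qed

end

lemma (in comm_group) beta_star_iff:
  assumes rm: "right_module R G sm" and U: "submod R G sm U" and V: "submod R G sm V"
  shows "beta_star R G sm U V \<longleftrightarrow>
    (\<forall>L. submod R G sm L \<and> U \<subseteq> L \<and> V <#> L = carrier G \<longrightarrow> L = carrier G) \<and>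
    (\<forall>L. submod R G sm L \<and> V \<subseteq> L \<and> U <#> L = carrier G \<longrightarrow> L = carrier G)"
  unfolding beta_star_def using small_quot_iff[OF rm U V] small_quot_iff[OF rm V U] by simp

lemma (in comm_group) main_lemma:
  assumes "right_module R G sm"
    and "\<forall>N. submod R G sm N \<longrightarrow>
           (\<exists>U A. cyclic_submod R G sm U \<and> small R G sm A \<and> N = U <#> A)"
  shows "principally_goldie_star_lifting R G sm \<longleftrightarrow> goldie_star_lifting R G sm"
proof -
  note rm = assms(1)
  show ?thesis
  proof
    assume G: "goldie_star_lifting R G sm"
    show "principally_goldie_star_lifting R G sm"
      unfolding principally_goldie_star_lifting_def
    proof (intro allI impI)
      fix U assume "cyclic_submod R G sm U"
      then have "submod R G sm U" using cyclic_is_submod[OF rm] by blast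
      then show "\<exists>D. direct_summand R G sm D \<and> beta_star R G sm U D"
        using G unfolding goldie_star_lifting_def by blast
    qed
  next
    assume PG: "principally_goldie_star_lifting R G sm"
    show "goldie_star_lifting R G sm"
      unfolding goldie_star_lifting_def
    proof (intro allI impI)
      fix N assume N: "submod R G sm N"
      obtain Xc A where XA: "cyclic_submod R G sm Xc" "small R G sm A" "N = Xc <#> A"
        using assms(2)[rule_format, OF N] by blast
      have X: "submod R G sm Xc" using cyclic_is_submod[OF rm XA(1)] .
      have Asub: "submod R G sm A" using XA(2) by (simp add: small_def)
      obtain D where D: "direct_summand R G sm D" "beta_star R G sm Xc D"
        using PG XA(1) unfolding principally_goldie_star_lifting_def by blast
      have Dsub: "submod R G sm D" using D(1) by (simp add: direct_summand_def)
      have P1: "\<forall>L. submod R G sm L \<and> Xc \<subseteq> L \<and> D <#> L = carrier G \<longrightarrow> L = carrier G"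
        and P2: "\<forall>L. submod R G sm L \<and> D \<subseteq> L \<and> Xc <#> L = carrier G \<longrightarrow> L = carrier G"
        using D(2) unfolding beta_star_iff[OF rm X Dsub] by (rule conjunct1, rule conjunct2)
      have sX: "subgroup Xc G" and sA: "subgroup A G" using X Asub by (auto simp: submod_def)
      have XC: "Xc \<subseteq> carrier G" "A \<subseteq> carrier G" using sX sA subgroup.subset by auto
      have XN: "Xc \<subseteq> N"
      proof
        fix x assume x: "x \<in> Xc"
        then have "x = x \<otimes> \<one>" "\<one> \<in> A" using XC sA subgroup.one_closed by auto
        then have "x \<in> Xc <#> A" using x unfolding set_mult_mem by blast
        then show "x \<in> N" using XA(3) by simp
      qed
      have Q1: "\<forall>L. submod R G sm L \<and> N \<subseteq> L \<and> D <#> L = carrier G \<longrightarrow> L = carrier G"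
      proof (intro allI impI)
        fix L assume "submod R G sm L \<and> N \<subseteq> L \<and> D <#> L = carrier G"
        then show "L = carrier G" using P1[rule_format, of L] XN by blast
      qed
      have Q2: "\<forall>L. submod R G sm L \<and> D \<subseteq> L \<and> N <#> L = carrier G \<longrightarrow> L = carrier G"
      proof (intro allI impI)
        fix L assume H: "submod R G sm L \<and> D \<subseteq> L \<and> N <#> L = carrier G"
        have Ls: "submod R G sm L" "D \<subseteq> L" using H by auto
        have NL: "N <#> L = carrier G" using H by auto
        have LC: "L \<subseteq> carrier G" using Ls(1) subgroup.subset by (auto simp: submod_def)
        have XL: "submod R G sm (Xc <#> L)" using sum_submod[OF rm X Ls(1)] .
        have XLC: "Xc <#> L \<subseteq> carrier G" using set_mult_closed[OF XC(1) LC] .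
        have "A <#> (Xc <#> L) = carrier G"
        proof
          show "A <#> (Xc <#> L) \<subseteq> carrier G" using set_mult_closed[OF XC(2) XLC] .
          show "carrier G \<subseteq> A <#> (Xc <#> L)"
          proof
            fix x assume "x \<in> carrier G"
            then have "x \<in> N <#> L" using NL by simp
            then obtain n l where nl: "n \<in> N" "l \<in> L" "x = n \<otimes> l" unfolding set_mult_mem by blast
            have "n \<in> Xc <#> A" using nl(1) XA(3) by simp
            then obtain a1 a2 where aa: "a1 \<in> Xc" "a2 \<in> A" "n = a1 \<otimes> a2"
              unfolding set_mult_mem by blast
            have cc: "a1 \<in> carrier G" "a2 \<in> carrier G" "l \<in> carrier G" using aa nl XC LC by auto
            have "x = a2 \<otimes> (a1 \<otimes> l)" using nl aa cc by (simp add: m_ac)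
            moreover have "a1 \<otimes> l \<in> Xc <#> L" using aa nl unfolding set_mult_mem by blast
            ultimately show "x \<in> A <#> (Xc <#> L)" using aa(2) set_mult_mem[of x A "Xc <#> L"] by blast
          qed
        qed
        then have "Xc <#> L = carrier G" using XA(2) XL unfolding small_def by simp
        then show "L = carrier G" using P2[rule_format, of L] Ls by blast
      qed
      have "beta_star R G sm N D" unfolding beta_star_iff[OF rm N Dsub] using Q1 Q2 by (intro conjI)
      then show "\<exists>D. direct_summand R G sm D \<and> beta_star R G sm N D" using D(1) by blast
    qed
  qed
qed


theorem proposition3p19:
  fixes R :: "('r, 'c) ring_scheme" and M :: "('b, 'd) monoid_scheme"
    and sm :: "'b \<Rightarrow> 'r \<Rightarrow> 'b"
  assumes "right_module R M sm"
    and "\<forall>N. submod R M sm N \<longrightarrow>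
           (\<exists>U A. cyclic_submod R M sm U \<and> small R M sm A \<and> N = U <#>\<^bsub>M\<^esub> A)"
  shows "principally_goldie_star_lifting R M sm \<longleftrightarrow> goldie_star_lifting R M sm"
  using comm_group.main_lemma[OF rm_cg[OF assms(1)] assms] .

end
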